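(* The map $D:\mathbb{Q}^{\mathscr{P}}\to\mathbb{Q}^{\mathscr{P}}$, $Df=S_2f-S_2\odot f$, is linear, satisfies the Leibniz rule $D(f\odot g)=(Df)\odot g+f\odot(Dg)$, and satisfies $D\langle f\rangle_q=\langle Df\rangle_q$ for all $f\in\mathbb{Q}^{\mathscr{P}}$, where on the left $D=q\frac{d}{dq}$.
   Context: $\mathscr{P}$ is the set of partitions $\lambda=(\lambda_1\ge\lambda_2\ge\dots)$, $|\lambda|=\sum\lambda_i$; $\mathbb{Q}^{\mathscr{P}}$ the functions $\mathscr{P}\to\mathbb{Q}$. $\langle f\rangle_q=\frac{\sum_\lambda f(\lambda)q^{|\lambda|}}{\sum_\lambda q^{|\lambda|}}$. $S_2(\lambda)=-\frac1{24}+\sum_i\lambda_i$ and $S_2f$ is the pointwise product. Induced product: with $u_\lambda=\prod_{i:\lambda_i>0}u_{\lambda_i}$ and $\langle f\rangle_{\vec u}=\frac{\sum_\lambda f(\lambda)u_\lambda}{\sum_\lambda u_\lambda}\in\mathbb{Q}[[u_1,u_2,\dots]]$ (a linear bijection in $f$), $f\odot g$ is defined by $\langle f\odot g\rangle_{\vec u}=\langle f\rangle_{\vec u}\langle g\rangle_{\vec u}$. *)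

theory Defs
  imports Main "HOL-Library.Multiset" "HOL-Computational_Algebra.Formal_Power_Series"
begin

typedef partition = "{M :: nat multiset. 0 \<notin># M}"
  by (rule exI[of _ "{#}"]) simp

definition psize :: "partition \<Rightarrow> nat" where
  "psize p = sum_mset (Rep_partition p)"

definition S2 :: "partition \<Rightarrow> rat" where
  "S2 p = - 1/24 + of_nat (psize p)"

text \<open>Elements of Q[[u_1,u_2,...]]: monomials prod u_i^{m_i} with finitely many
  m_i > 0 correspond bijectively to partitions (lambda with multiplicities m_i),
  the monomial of lambda being u_lambda. A series is its coefficient function.\<close>
type_synonym useries = "partition \<Rightarrow> rat"

text \<open>Product of series in Q[[u_1,u_2,...]] (u_a * u_b = u_(a union b)).\<close>
definition umul :: "useries \<Rightarrow> useries \<Rightarrow> useries" where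
  "umul F G p = (\<Sum>(a, b) \<in> {(a, b). Rep_partition a + Rep_partition b = Rep_partition p}.
                    F a * G b)"

definition useries_of :: "(partition \<Rightarrow> rat) \<Rightarrow> useries" where
  "useries_of f = (\<lambda>p. f p)"

definition ubracket :: "(partition \<Rightarrow> rat) \<Rightarrow> useries" where
  "ubracket f = (THE F. umul F (useries_of (\<lambda>_. 1)) = useries_of f)"

definition odot :: "(partition \<Rightarrow> rat) \<Rightarrow> (partition \<Rightarrow> rat) \<Rightarrow> (partition \<Rightarrow> rat)" where
  "odot f g = (THE h. ubracket h = umul (ubracket f) (ubracket g))"

definition qbracket :: "(partition \<Rightarrow> rat) \<Rightarrow> rat fps" where
  "qbracket f = Abs_fps (\<lambda>n. \<Sum>p \<in> {p. psize p = n}. f p)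
              / Abs_fps (\<lambda>n. of_nat (card {p. psize p = n}))"

definition Dop :: "(partition \<Rightarrow> rat) \<Rightarrow> (partition \<Rightarrow> rat)" where
  "Dop f = (\<lambda>p. S2 p * f p - odot S2 f p)"

end

theory Submission
  imports Defs
begin


lemma finite_submsets: "finite {A. A \<subseteq># (M::'a multiset)}"
proof (induction M)
  case empty then show ?case by simp
next
  case (add x M)
  have "{A. A \<subseteq># add_mset x M} \<subseteq> {A. A \<subseteq># M} \<union> add_mset x ` {A. A \<subseteq># M}"
  proof
    fix A assume "A \<in> {A. A \<subseteq># add_mset x M}"
    hence A: "A \<subseteq># add_mset x M" by simp
    show "A \<in> {A. A \<subseteq># M} \<union> add_mset x ` {A. A \<subseteq># M}"
    proof (cases "x \<in># A")
      case True
      then have "A = add_mset x (A - {#x#})" by simp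
      moreover have "A - {#x#} \<subseteq># M" using A
        by (metis calculation mset_subset_eq_add_mset_cancel)
      ultimately show ?thesis by blast
    next
      case False
      then have "A \<subseteq># M" using A
        by (metis Diff_eq_empty_iff_mset minus_add_mset_if_not_in_lhs)
      then show ?thesis by blast
    qed
  qed
  then show ?case using add finite_subset by blast
qed

lemma Rep_p: "0 \<notin># Rep_partition p" using Rep_partition by auto

lemma size_le_psize: "size (Rep_partition p) \<le> psize p"
proof -
  have "\<And>M::nat multiset. 0 \<notin># M \<Longrightarrow> size M \<le> sum_mset M"
  proof -
    fix M :: "nat multiset"
    show "0 \<notin># M \<Longrightarrow> size M \<le> sum_mset M"
      by (induction M) auto
  qed
  then show ?thesis unfolding psize_def using Rep_p by blast
qed

lemma mem_le_psize: "x \<in># Rep_partition p \<Longrightarrow> x \<le> psize p"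
  unfolding psize_def by (metis le_add1 sum_mset.remove)

definition pe :: partition where "pe = Abs_partition {#}"
definition padd :: "partition \<Rightarrow> partition \<Rightarrow> partition" where
  "padd a b = Abs_partition (Rep_partition a + Rep_partition b)"
definition SP :: "partition \<Rightarrow> (partition \<times> partition) set" where
  "SP p = {(a, b). Rep_partition a + Rep_partition b = Rep_partition p}"

lemma Rep_pe[simp]: "Rep_partition pe = {#}"
  unfolding pe_def by (simp add: Abs_partition_inverse)

lemma Rep_padd[simp]: "Rep_partition (padd a b) = Rep_partition a + Rep_partition b"
  unfolding padd_def using Rep_p[of a] Rep_p[of b] by (simp add: Abs_partition_inverse)

lemma Rep_eq: "(a = b) = (Rep_partition a = Rep_partition b)"
  by (simp add: Rep_partition_inject)

lemma psize_padd[simp]: "psize (padd a b) = psize a + psize b"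
  unfolding psize_def by simp

lemma psize_pe[simp]: "psize pe = 0" unfolding psize_def by simp

lemma psize0: "psize p = 0 \<longleftrightarrow> p = pe"
proof
  assume "psize p = 0"
  then have "Rep_partition p = {#}" unfolding psize_def using Rep_p[of p]
    by (metis sum_mset_0_iff multiset_nonemptyE)
  then show "p = pe" by (simp add: Rep_eq)
qed simp

lemma finite_sub: "finite {a. Rep_partition a \<subseteq># Rep_partition p}"
proof -
  have "Rep_partition ` {a. Rep_partition a \<subseteq># Rep_partition p} \<subseteq> {A. A \<subseteq># Rep_partition p}"
    by auto
  then have "finite (Rep_partition ` {a. Rep_partition a \<subseteq># Rep_partition p})"
    using finite_submsets finite_subset by blast
  then show ?thesis using finite_imageD inj_on_def Rep_partition_inject by (metis (no_types, lifting))
qed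

lemma finite_SP: "finite (SP p)"
proof -
  have "SP p \<subseteq> {a. Rep_partition a \<subseteq># Rep_partition p} \<times> {a. Rep_partition a \<subseteq># Rep_partition p}"
    unfolding SP_def by (auto, metis mset_subset_eq_add_left, metis mset_subset_eq_add_right)
  then show ?thesis using finite_sub finite_subset by blast
qed

definition Pn :: "nat \<Rightarrow> partition set" where "Pn n = {p. psize p = n}"

lemma finite_Pn: "finite (Pn n)"
proof -
  define B where "B = (\<Sum>i\<in>{..n}. replicate_mset n i)"
  have cB: "count B x = (if x \<le> n then n else 0)" for x
    unfolding B_def by (simp add: count_sum)
  have "Pn n \<subseteq> {a. Rep_partition a \<subseteq># B}"
  proof
    fix p assume "p \<in> Pn n"
    then have ps: "psize p = n" by (simp add: Pn_def)
    have "count (Rep_partition p) x \<le> count B x" for x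
    proof (cases "x \<in># Rep_partition p")
      case True
      then have "x \<le> n" using mem_le_psize ps by blast
      moreover have "count (Rep_partition p) x \<le> n"
        using size_le_psize[of p] ps count_le_size[of "Rep_partition p" x]  by linarith
      ultimately show ?thesis using cB by simp
    next
      case False then show ?thesis by (simp add: not_in_iff)
    qed
    then show "p \<in> {a. Rep_partition a \<subseteq># B}" by (simp add: subseteq_mset_def)
  qed
  moreover have "finite {a. Rep_partition a \<subseteq># B}"
  proof -
    have "Rep_partition ` {a. Rep_partition a \<subseteq># B} \<subseteq> {A. A \<subseteq># B}" by auto
    then have "finite (Rep_partition ` {a. Rep_partition a \<subseteq># B})"
      using finite_submsets finite_subset by blast
    then show ?thesis using finite_imageD inj_on_def Rep_partition_inject by (metis (no_types, lifting))
  qed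
  ultimately show ?thesis using finite_subset by blast
qed

lemma umul_fst: "umul F G p = (\<Sum>q\<in>SP p. F (fst q) * G (snd q))"
  unfolding umul_def SP_def by (simp add: case_prod_beta)

lemma umul_comm: "umul F G = umul G F"
proof
  fix p
  show "umul F G p = umul G F p" unfolding umul_fst
    by (rule sum.reindex_bij_witness[where i="\<lambda>z. (snd z, fst z)" and j="\<lambda>z. (snd z, fst z)"])
       (auto simp: SP_def add.commute)
qed

lemma umul_add: "umul (\<lambda>p. F p + G p) H = (\<lambda>p. umul F H p + umul G H p)"
  unfolding umul_fst by (simp add: distrib_right sum.distrib)

lemma umul_diff: "umul (\<lambda>p. F p - G p) H = (\<lambda>p. umul F H p - umul G H p)"
  unfolding umul_fst by (simp add: left_diff_distrib sum_subtractf)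

lemma umul_scale: "umul (\<lambda>p. c * F p) H = (\<lambda>p. c * umul F H p)"
  unfolding umul_fst by (simp add: sum_distrib_left mult.assoc)

definition dl :: "partition \<Rightarrow> rat" where "dl p = (if p = pe then 1 else 0)"

lemma umul_dl: "umul dl F = F"
proof
  fix p
  have "umul dl F p = (\<Sum>q\<in>SP p. if q = (pe, p) then F p else 0)"
    unfolding umul_fst
  proof (rule sum.cong)
    fix q assume "q \<in> SP p"
    then show "dl (fst q) * F (snd q) = (if q = (pe, p) then F p else 0)"
      by (cases q) (auto simp: dl_def SP_def Rep_eq dest: Rep_partition_inject[THEN iffD1])
  qed simp
  also have "\<dots> = F p" using finite_SP by (simp add: SP_def)
  finally show "umul dl F p = F p" .
qed

lemma umul_assoc: "umul (umul F G) H = umul F (umul G H)"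
proof
  fix p
  have "umul (umul F G) H p = (\<Sum>q\<in>SP p. \<Sum>r\<in>SP (fst q). F (fst r) * G (snd r) * H (snd q))"
    unfolding umul_fst by (simp add: sum_distrib_right)
  also have "\<dots> = (\<Sum>z\<in>Sigma (SP p) (\<lambda>q. SP (fst q)). F (fst (snd z)) * G (snd (snd z)) * H (snd (fst z)))"
    by (subst sum.Sigma) (auto simp: finite_SP case_prod_beta)
  also have "\<dots> = (\<Sum>z\<in>Sigma (SP p) (\<lambda>q. SP (snd q)). F (fst (fst z)) * G (fst (snd z)) * H (snd (snd z)))"
    apply (rule sum.reindex_bij_witness[where j="\<lambda>z. ((fst (snd z), padd (snd (snd z)) (snd (fst z))), (snd (snd z), snd (fst z)))"
          and i="\<lambda>z. ((padd (fst (fst z)) (fst (snd z)), snd (snd z)), (fst (fst z), fst (snd z)))"])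
    apply (auto simp: SP_def add.assoc[symmetric] Rep_partition_inverse intro!: Rep_partition_inject[THEN iffD1])
    apply (metis add.assoc)
    done
  also have "\<dots> = (\<Sum>q\<in>SP p. \<Sum>r\<in>SP (snd q). F (fst q) * G (fst r) * H (snd r))"
    by (subst sum.Sigma) (auto simp: finite_SP case_prod_beta)
  also have "\<dots> = umul F (umul G H) p"
    unfolding umul_fst by (simp add: sum_distrib_left mult.assoc)
  finally show "umul (umul F G) H p = umul F (umul G H) p" .
qed

lemma umul_lcomm: "umul F (umul G H) = umul G (umul F H)"
  by (metis umul_assoc umul_comm)



lemma sum_pow_sign: "finite S \<Longrightarrow> (\<Sum>B\<in>Pow S. (-1::rat) ^ card B) = (if S = {} then 1 else 0)"
proof (induction S rule: finite_induct)
  case empty then show ?case by simp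
next
  case (insert x F)
  have fin: "finite (Pow F)" using insert by simp
  have disj: "Pow F \<inter> insert x ` Pow F = {}" using insert by auto
  have inj: "inj_on (insert x) (Pow F)" using insert unfolding inj_on_def by auto
  have "(\<Sum>B\<in>Pow (insert x F). (-1::rat) ^ card B)
      = (\<Sum>B\<in>Pow F. (-1::rat) ^ card B) + (\<Sum>B\<in>insert x ` Pow F. (-1::rat) ^ card B)"
    unfolding Pow_insert using fin disj by (simp add: sum.union_disjoint)
  also have "(\<Sum>B\<in>insert x ` Pow F. (-1::rat) ^ card B) = (\<Sum>B\<in>Pow F. (-1::rat) ^ card (insert x B))"
    using inj by (simp add: sum.reindex)
  also have "\<dots> = (\<Sum>B\<in>Pow F. - ((-1::rat) ^ card B))"
  proof (rule sum.cong)
    fix B assume "B \<in> Pow F"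
    then have "finite B" "x \<notin> B" using insert finite_subset by auto
    then show "(-1::rat) ^ card (insert x B) = - ((-1) ^ card B)" by simp
  qed simp
  finally show ?case by (simp add: sum_negf)
qed

definition Z :: "partition \<Rightarrow> rat" where "Z = (\<lambda>_. 1)"

definition Zinv :: "partition \<Rightarrow> rat" where
  "Zinv p = (if Rep_partition p = mset_set (set_mset (Rep_partition p))
             then (-1) ^ card (set_mset (Rep_partition p)) else 0)"

lemma Z_Zinv: "umul Z Zinv = dl"
proof
  fix p
  let ?M = "Rep_partition p"
  have "umul Z Zinv p = (\<Sum>q\<in>SP p. Zinv (snd q))" unfolding umul_fst Z_def by simp
  also have "\<dots> = (\<Sum>b\<in>{b. Rep_partition b \<subseteq># ?M}. Zinv b)"
  proof (rule sum.reindex_bij_witness[where j="snd" and i="\<lambda>b. (Abs_partition (?M - Rep_partition b), b)"])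
    fix q assume "q \<in> SP p"
    then obtain a b where q: "q = (a, b)" "Rep_partition a + Rep_partition b = ?M" by (auto simp: SP_def)
    then show "(Abs_partition (?M - Rep_partition (snd q)), snd q) = q"
      by (metis Rep_partition_inverse add_diff_cancel_right' snd_conv)
    show "snd q \<in> {b. Rep_partition b \<subseteq># ?M}" using q by (simp, metis mset_subset_eq_add_right)
  next
    fix b assume b: "b \<in> {b. Rep_partition b \<subseteq># ?M}"
    have z: "0 \<notin># ?M - Rep_partition b" using Rep_p[of p] by (meson in_diffD)
    then show "snd (Abs_partition (?M - Rep_partition b), b) = b" by simp
    show "(Abs_partition (?M - Rep_partition b), b) \<in> SP p"
      using z b by (simp add: SP_def Abs_partition_inverse)
  qed simp
  also have "\<dots> = (\<Sum>b\<in>{b. Rep_partition b \<subseteq># ?M \<and> Rep_partition b = mset_set (set_mset (Rep_partition b))}.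
       (-1) ^ card (set_mset (Rep_partition b)))"
    by (rule sum.mono_neutral_cong_right) (auto simp: finite_sub Zinv_def)
  also have "\<dots> = (\<Sum>B\<in>Pow (set_mset ?M). (-1) ^ card B)"
  proof (rule sum.reindex_bij_witness[where j="\<lambda>b. set_mset (Rep_partition b)" and i="\<lambda>B. Abs_partition (mset_set B)"])
    fix b assume "b \<in> {b. Rep_partition b \<subseteq># ?M \<and> Rep_partition b = mset_set (set_mset (Rep_partition b))}"
    then have b: "Rep_partition b \<subseteq># ?M" "Rep_partition b = mset_set (set_mset (Rep_partition b))" by auto
    show "Abs_partition (mset_set (set_mset (Rep_partition b))) = b"
      using b(2) by (metis Rep_partition_inverse)
    show "set_mset (Rep_partition b) \<in> Pow (set_mset ?M)" using b(1) by (auto dest: mset_subset_eqD)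
    show "(-1) ^ card (set_mset (Rep_partition b)) = (-1::rat) ^ card (set_mset (Rep_partition b))" by simp
  next
    fix B assume "B \<in> Pow (set_mset ?M)"
    then have B: "B \<subseteq> set_mset ?M" "finite B" by (auto intro: finite_subset)
    have z: "0 \<notin># mset_set B" using B Rep_p[of p] by auto
    then have R: "Rep_partition (Abs_partition (mset_set B)) = mset_set B" by (simp add: Abs_partition_inverse)
    show "set_mset (Rep_partition (Abs_partition (mset_set B))) = B" using R B by simp
    have "mset_set B \<subseteq># ?M"
    proof (rule mset_subset_eqI)
      fix a show "count (mset_set B) a \<le> count ?M a"
        using B by (cases "a \<in> B") (auto simp: count_mset_set)
    qed
    then show "Abs_partition (mset_set B) \<in> {b. Rep_partition b \<subseteq># ?M \<and> Rep_partition b = mset_set (set_mset (Rep_partition b))}"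
      using R B by simp
  qed
  also have "\<dots> = (if set_mset ?M = {} then 1 else 0)" by (simp add: sum_pow_sign)
  also have "\<dots> = dl p" by (simp add: dl_def Rep_eq)
  finally show "umul Z Zinv p = dl p" .
qed



typedef ser = "UNIV :: (partition \<Rightarrow> rat) set" by simp

instantiation ser :: comm_ring_1
begin
definition zero_ser_def: "0 = Abs_ser (\<lambda>_. 0)"
definition one_ser_def: "1 = Abs_ser dl"
definition plus_ser_def: "a + b = Abs_ser (\<lambda>p. Rep_ser a p + Rep_ser b p)"
definition minus_ser_def: "a - b = Abs_ser (\<lambda>p. Rep_ser a p - Rep_ser b p)"
definition uminus_ser_def: "- a = Abs_ser (\<lambda>p. - Rep_ser a p)"
definition times_ser_def: "a * b = Abs_ser (umul (Rep_ser a) (Rep_ser b))"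
instance
proof
  fix a b c :: ser
  show "a + b + c = a + (b + c)" by (simp add: plus_ser_def Abs_ser_inverse add.assoc)
  show "a + b = b + a" by (simp add: plus_ser_def add.commute)
  show "0 + a = a" by (simp add: plus_ser_def zero_ser_def Abs_ser_inverse Rep_ser_inverse)
  show "- a + a = 0" by (simp add: plus_ser_def zero_ser_def uminus_ser_def Abs_ser_inverse)
  show "a - b = a + - b" by (simp add: plus_ser_def minus_ser_def uminus_ser_def Abs_ser_inverse)
  show "a * b * c = a * (b * c)" by (simp add: times_ser_def Abs_ser_inverse umul_assoc)
  show "a * b = b * a" by (simp add: times_ser_def umul_comm)
  show "1 * a = a" by (simp add: times_ser_def one_ser_def Abs_ser_inverse umul_dl Rep_ser_inverse)
  show "(a + b) * c = a * c + b * c"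
    by (simp add: times_ser_def plus_ser_def Abs_ser_inverse umul_add)
  show "(0::ser) \<noteq> 1"
  proof
    assume "(0::ser) = 1"
    then have "(\<lambda>_. 0::rat) = dl" by (simp add: zero_ser_def one_ser_def Abs_ser_inject)
    then have "(0::rat) = dl pe" by metis
    then show False by (simp add: dl_def)
  qed
qed
end

lemma Rep_plus: "Rep_ser (a + b) = (\<lambda>p. Rep_ser a p + Rep_ser b p)"
  by (simp add: plus_ser_def Abs_ser_inverse)
lemma Rep_minus: "Rep_ser (a - b) = (\<lambda>p. Rep_ser a p - Rep_ser b p)"
  by (simp add: minus_ser_def Abs_ser_inverse)
lemma Rep_times: "Rep_ser (a * b) = umul (Rep_ser a) (Rep_ser b)"
  by (simp add: times_ser_def Abs_ser_inverse)
lemma Rep_one: "Rep_ser 1 = dl"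
  by (simp add: one_ser_def Abs_ser_inverse)
lemma Rep_zero: "Rep_ser 0 = (\<lambda>_. 0)"
  by (simp add: zero_ser_def Abs_ser_inverse)
lemma Rep_Abs[simp]: "Rep_ser (Abs_ser f) = f"
  by (simp add: Abs_ser_inverse)

definition cst :: "rat \<Rightarrow> ser" where "cst c = Abs_ser (\<lambda>p. c * dl p)"

lemma umul_dl_scale: "umul (\<lambda>p. c * dl p) F = (\<lambda>p. c * F p)"
  by (simp add: umul_scale umul_dl)

lemma Rep_cst_times: "Rep_ser (cst c * a) = (\<lambda>p. c * Rep_ser a p)"
  unfolding Rep_times cst_def Rep_Abs by (rule umul_dl_scale)

lemma cst_add: "cst (a + b) = cst a + cst b"
  unfolding cst_def plus_ser_def by (simp add: distrib_right)

definition Es :: "ser \<Rightarrow> ser" where "Es a = Abs_ser (\<lambda>p. of_nat (psize p) * Rep_ser a p)"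

lemma psize_SP: "q \<in> SP p \<Longrightarrow> psize p = psize (fst q) + psize (snd q)"
proof -
  assume "q \<in> SP p"
  then have "Rep_partition p = Rep_partition (fst q) + Rep_partition (snd q)" by (auto simp: SP_def)
  then show ?thesis unfolding psize_def by simp
qed

lemma Es_times: "Es (a * b) = Es a * b + a * Es b"
proof -
  have "Rep_ser (Es (a * b)) p = Rep_ser (Es a * b + a * Es b) p" for p
  proof -
    have "of_nat (psize p) * umul (Rep_ser a) (Rep_ser b) p
       = (\<Sum>q\<in>SP p. of_nat (psize (fst q)) * Rep_ser a (fst q) * Rep_ser b (snd q) + Rep_ser a (fst q) * (of_nat (psize (snd q)) * Rep_ser b (snd q)))"
      unfolding umul_fst sum_distrib_left
    proof (rule sum.cong)
      fix q assume q: "q \<in> SP p"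
      show "of_nat (psize p) * (Rep_ser a (fst q) * Rep_ser b (snd q)) =
         of_nat (psize (fst q)) * Rep_ser a (fst q) * Rep_ser b (snd q) + Rep_ser a (fst q) * (of_nat (psize (snd q)) * Rep_ser b (snd q))"
        unfolding psize_SP[OF q] of_nat_add by (simp only: algebra_simps)
    qed simp
    also have "\<dots> = umul (\<lambda>p. of_nat (psize p) * Rep_ser a p) (Rep_ser b) p + umul (Rep_ser a) (\<lambda>p. of_nat (psize p) * Rep_ser b p) p"
      unfolding umul_fst by (simp only: sum.distrib)
    finally show ?thesis by (simp add: Es_def Rep_times Rep_plus)
  qed
  then show ?thesis using Rep_ser_inject by blast
qed

lemma Es_one: "Es 1 = 0"
proof -
  have "(\<lambda>p. of_nat (psize p) * dl p) = (\<lambda>_. (0::rat))" by (auto simp: dl_def)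
  then show ?thesis by (simp add: Es_def Rep_one zero_ser_def)
qed

lemma Es_add: "Es (a + b) = Es a + Es b"
  by (simp add: Es_def plus_ser_def distrib_left)
lemma Es_diff: "Es (a - b) = Es a - Es b"
  by (simp add: Es_def minus_ser_def right_diff_distrib)
lemma Es_cst: "Es (cst c * a) = cst c * Es a"
proof -
  have "Rep_ser (Es (cst c * a)) = Rep_ser (cst c * Es a)"
    by (simp add: Es_def Rep_cst_times mult.left_commute)
  then show ?thesis using Rep_ser_inject by blast
qed



abbreviation "Zs \<equiv> Abs_ser Z"
abbreviation "Zi \<equiv> Abs_ser Zinv"

lemma Zs_Zi: "Zs * Zi = 1"
  by (simp add: times_ser_def Z_Zinv one_ser_def)

lemma ser_eqI: "Rep_ser x = Rep_ser y \<Longrightarrow> x = y" using Rep_ser_inject by blast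

lemma ubracket_eq: "ubracket h = Rep_ser (Abs_ser h * Zi)"
  unfolding ubracket_def useries_of_def
proof (rule the_equality)
  have "umul (Rep_ser (Abs_ser h * Zi)) (\<lambda>_. 1) = Rep_ser (Abs_ser h * Zi * Zs)"
    by (simp add: Rep_times Z_def)
  also have "\<dots> = h" by (simp add: mult.assoc mult.commute[of Zi] Zs_Zi)
  finally show "umul (Rep_ser (Abs_ser h * Zi)) (\<lambda>_. 1) = h" .
next
  fix F assume "umul F (\<lambda>_. 1) = h"
  then have "Abs_ser h = Abs_ser F * Zs" by (simp add: times_ser_def Z_def)
  then have "Abs_ser h * Zi = Abs_ser F" by (simp add: mult.assoc Zs_Zi)
  then show "F = Rep_ser (Abs_ser h * Zi)" by simp
qed

lemma odot_eq: "odot f g = Rep_ser (Abs_ser f * Abs_ser g * Zi)"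
  unfolding odot_def
proof (rule the_equality)
  show "ubracket (Rep_ser (Abs_ser f * Abs_ser g * Zi)) = umul (ubracket f) (ubracket g)"
    unfolding ubracket_eq Rep_times[symmetric] by (simp add: Rep_ser_inverse ac_simps)
next
  fix h assume "ubracket h = umul (ubracket f) (ubracket g)"
  then have "Abs_ser h * Zi = (Abs_ser f * Zi) * (Abs_ser g * Zi)"
    unfolding ubracket_eq Rep_times[symmetric] by (simp add: Rep_ser_inject Rep_ser_inverse)
  then have "Abs_ser h * Zi * Zs = (Abs_ser f * Abs_ser g * Zi) * (Zi * Zs)" by (simp add: ac_simps)
  then have "Abs_ser h = Abs_ser f * Abs_ser g * Zi"
    by (simp add: mult.assoc mult.commute[of Zi] Zs_Zi)
  then show "h = Rep_ser (Abs_ser f * Abs_ser g * Zi)" by (metis Rep_Abs)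
qed

definition DD :: "ser \<Rightarrow> ser" where "DD x = Es x - Es Zs * Zi * x"

lemma S2_ser: "Abs_ser S2 = Es Zs + cst (-1/24) * Zs"
  by (rule ser_eqI) (simp add: Rep_plus Rep_cst_times Es_def S2_def Z_def fun_eq_iff)

lemma Dop_eq: "Dop f = Rep_ser (DD (Abs_ser f))"
proof -
  have a: "(\<lambda>p. S2 p * f p) = Rep_ser (Es (Abs_ser f) + cst (-1/24) * Abs_ser f)"
    unfolding Rep_plus Rep_cst_times Es_def Rep_Abs S2_def by (simp add: algebra_simps)
  have b: "Abs_ser S2 * Abs_ser f * Zi = Es Zs * Zi * Abs_ser f + cst (-1/24) * Abs_ser f"
  proof -
    have "Abs_ser S2 * Abs_ser f * Zi = Es Zs * Zi * Abs_ser f + cst (-1/24) * Abs_ser f * (Zs * Zi)"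
      unfolding S2_ser by (simp add: algebra_simps)
    then show ?thesis by (simp add: Zs_Zi)
  qed
  have "Dop f = (\<lambda>p. Rep_ser (Es (Abs_ser f) + cst (-1/24) * Abs_ser f) p - Rep_ser (Abs_ser S2 * Abs_ser f * Zi) p)"
    unfolding Dop_def odot_eq a[symmetric] by simp
  also have "\<dots> = Rep_ser (Es (Abs_ser f) + cst (-1/24) * Abs_ser f - (Es Zs * Zi * Abs_ser f + cst (-1/24) * Abs_ser f))"
    unfolding b Rep_minus by simp
  also have "\<dots> = Rep_ser (DD (Abs_ser f))" unfolding DD_def by (simp add: algebra_simps)
  finally show ?thesis .
qed

lemma Es_Zi: "Es Zi = - (Es Zs * Zi * Zi)"
proof -
  have "Es Zs * Zi + Zs * Es Zi = 0" using Es_times[of Zs Zi] by (simp add: Zs_Zi Es_one)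
  then have "(Es Zs * Zi + Zs * Es Zi) * Zi = 0" by simp
  then have "Es Zs * Zi * Zi + (Zs * Zi) * Es Zi = 0" by (simp add: algebra_simps)
  then show ?thesis by (simp add: Zs_Zi eq_neg_iff_add_eq_0 add.commute)
qed

lemma DD_leibniz: "DD (x * y * Zi) = DD x * y * Zi + x * DD y * Zi"
  unfolding DD_def Es_times Es_Zi by (simp add: algebra_simps)

lemma DD_lin: "DD (cst a * x + cst b * y) = cst a * DD x + cst b * DD y"
  unfolding DD_def Es_add Es_cst by (simp add: algebra_simps)

lemma part1: "Dop (\<lambda>p. a * f p + b * g p) = (\<lambda>p. a * Dop f p + b * Dop g p)"
proof -
  have "Abs_ser (\<lambda>p. a * f p + b * g p) = cst a * Abs_ser f + cst b * Abs_ser g"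
    by (rule ser_eqI) (simp add: Rep_plus Rep_cst_times)
  then have "Dop (\<lambda>p. a * f p + b * g p) = Rep_ser (cst a * DD (Abs_ser f) + cst b * DD (Abs_ser g))"
    unfolding Dop_eq by (simp add: DD_lin)
  then show ?thesis by (simp add: Rep_plus Rep_cst_times Dop_eq)
qed

lemma part2: "Dop (odot f g) = (\<lambda>p. odot (Dop f) g p + odot f (Dop g) p)"
  unfolding Dop_eq odot_eq by (simp add: Rep_ser_inverse DD_leibniz Rep_plus)



unbundle fps_syntax

definition Qs :: "ser \<Rightarrow> rat fps" where
  "Qs x = Abs_fps (\<lambda>n. \<Sum>p\<in>Pn n. Rep_ser x p)"

lemma Qs_nth: "Qs x $ n = (\<Sum>p\<in>Pn n. Rep_ser x p)"
  by (simp add: Qs_def)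

lemma Qs_times: "Qs (x * y) = Qs x * Qs y"
proof (rule fps_ext)
  fix n
  have "Qs (x * y) $ n = (\<Sum>p\<in>Pn n. \<Sum>q\<in>SP p. Rep_ser x (fst q) * Rep_ser y (snd q))"
    by (simp add: Qs_nth Rep_times umul_fst)
  also have "\<dots> = (\<Sum>z\<in>Sigma (Pn n) SP. Rep_ser x (fst (snd z)) * Rep_ser y (snd (snd z)))"
    by (subst sum.Sigma) (auto simp: finite_Pn finite_SP case_prod_beta)
  also have "\<dots> = (\<Sum>z\<in>Sigma {0..n} (\<lambda>i. Pn i \<times> Pn (n - i)). Rep_ser x (fst (snd z)) * Rep_ser y (snd (snd z)))"
  proof (rule sum.reindex_bij_witness[where j="\<lambda>z. (psize (fst (snd z)), snd z)"
        and i="\<lambda>z. (padd (fst (snd z)) (snd (snd z)), snd z)"])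
    fix z assume "z \<in> Sigma (Pn n) SP"
    then obtain p a b where z: "z = (p, (a, b))" "psize p = n" "Rep_partition a + Rep_partition b = Rep_partition p"
      by (auto simp: Pn_def SP_def)
    then have ps: "psize a + psize b = n" using psize_SP[of "(a,b)" p] by (simp add: SP_def)
    show "(padd (fst (snd (psize (fst (snd z)), snd z))) (snd (snd (psize (fst (snd z)), snd z))), snd (psize (fst (snd z)), snd z)) = z"
      using z by (simp add: Rep_eq)
    show "(psize (fst (snd z)), snd z) \<in> Sigma {0..n} (\<lambda>i. Pn i \<times> Pn (n - i))"
      using z ps by (auto simp: Pn_def)
  next
    fix z assume "z \<in> Sigma {0..n} (\<lambda>i. Pn i \<times> Pn (n - i))"
    then obtain k a b where z: "z = (k, (a, b))" "k \<le> n" "psize a = k" "psize b = n - k"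
      by (auto simp: Pn_def)
    show "(psize (fst (snd (padd (fst (snd z)) (snd (snd z)), snd z))), snd (padd (fst (snd z)) (snd (snd z)), snd z)) = z"
      using z by simp
    show "(padd (fst (snd z)) (snd (snd z)), snd z) \<in> Sigma (Pn n) SP"
      using z by (auto simp: Pn_def SP_def)
  qed simp
  also have "\<dots> = (\<Sum>i=0..n. \<Sum>q\<in>Pn i \<times> Pn (n - i). Rep_ser x (fst q) * Rep_ser y (snd q))"
    by (subst sum.Sigma) (auto simp: finite_Pn case_prod_beta)
  also have "\<dots> = (Qs x * Qs y) $ n"
    unfolding fps_mult_nth Qs_nth sum_product sum.cartesian_product by (simp add: case_prod_beta)
  finally show "Qs (x * y) $ n = (Qs x * Qs y) $ n" .
qed

lemma Qs_minus: "Qs (x - y) = Qs x - Qs y"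
  by (rule fps_ext) (simp add: Qs_nth Rep_minus sum_subtractf)

lemma Pn0: "Pn 0 = {pe}"
  by (auto simp: Pn_def psize0)

lemma Qs_one: "Qs 1 = 1"
proof (rule fps_ext)
  fix n
  show "Qs 1 $ n = 1 $ n"
  proof (cases "n = 0")
    case True then show ?thesis by (simp add: Qs_nth Pn0 Rep_one dl_def)
  next
    case False
    then have "\<forall>p\<in>Pn n. dl p = 0" by (auto simp: Pn_def dl_def)
    then show ?thesis using False by (simp add: Qs_nth Rep_one)
  qed
qed

lemma Qs_Es: "Qs (Es x) = fps_X * fps_deriv (Qs x)"
proof (rule fps_ext)
  fix n
  have "Qs (Es x) $ n = of_nat n * Qs x $ n"
    by (simp add: Qs_nth Es_def sum_distrib_left Pn_def)
  then show "Qs (Es x) $ n = (fps_X * fps_deriv (Qs x)) $ n"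
    by (cases n) (simp_all add: fps_deriv_nth)
qed

lemma qbracket_eq: "qbracket f = Qs (Abs_ser f) / Qs Zs"
proof -
  have "Abs_fps (\<lambda>n. of_nat (card {p. psize p = n})) = Qs Zs"
    by (rule fps_ext) (simp add: Qs_nth Z_def Pn_def)
  moreover have "Abs_fps (\<lambda>n. \<Sum>p \<in> {p. psize p = n}. f p) = Qs (Abs_ser f)"
    by (rule fps_ext) (simp add: Qs_nth Pn_def)
  ultimately show ?thesis unfolding qbracket_def by simp
qed

lemma part3: "fps_X * fps_deriv (qbracket f) = qbracket (Dop f)"
proof -
  define P where "P = Qs Zs"
  define G where "G = Qs Zi"
  define Q where "Q = Qs (Abs_ser f)"
  have PG: "P * G = 1" unfolding P_def G_def by (simp add: Qs_times[symmetric] Zs_Zi Qs_one)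
  then have P0: "P $ 0 \<noteq> 0" by (metis fps_mult_nth_0 fps_one_nth mult_zero_left one_neq_zero)
  have div: "A / P = A * G" for A
    using fps_divide_unit[OF P0] fps_inverse_unique[OF PG] by simp
  have "fps_deriv (P * G) = 0" using PG by simp
  then have d: "fps_deriv P * G + P * fps_deriv G = 0" by (simp add: fps_deriv_mult add.commute)
  have dG: "fps_deriv G = - (fps_deriv P * G * G)"
  proof -
    have "(fps_deriv P * G + P * fps_deriv G) * G = 0" using d by simp
    then have "fps_deriv P * G * G + (P * G) * fps_deriv G = 0" by (simp add: algebra_simps)
    then show ?thesis using PG by (simp add: eq_neg_iff_add_eq_0 add.commute)
  qed
  have "qbracket (Dop f) = Qs (DD (Abs_ser f)) * G"
    unfolding qbracket_eq Dop_eq div[unfolded P_def] by (simp add: Rep_ser_inverse)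
  also have "\<dots> = (fps_X * fps_deriv Q - fps_X * fps_deriv P * G * Q) * G"
    unfolding DD_def Qs_minus Qs_times Qs_Es P_def G_def Q_def by (simp add: algebra_simps)
  also have "\<dots> = fps_X * fps_deriv (Q * G)"
    by (simp add: fps_deriv_mult dG algebra_simps)
  also have "\<dots> = fps_X * fps_deriv (qbracket f)"
    unfolding qbracket_eq div[unfolded P_def] Q_def by simp
  finally show ?thesis by simp
qed


theorem proposition5p1p1:
  shows "(\<forall>(a::rat) b f g. Dop (\<lambda>p. a * f p + b * g p) = (\<lambda>p. a * Dop f p + b * Dop g p))
       \<and> (\<forall>f g. Dop (odot f g) = (\<lambda>p. odot (Dop f) g p + odot f (Dop g) p))
       \<and> (\<forall>f. fps_X * fps_deriv (qbracket f) = qbracket (Dop f))"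
  using part1 part2 part3 by blast

end
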